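(* $\mathrm{cof}^{*}(\mathcal{S}pl)=\mathfrak{c}$.
   Context: For an infinite $A\subseteq\omega$, let $S(A)$ be the set of all $\sigma\in2^{<\omega}$ such that $\sigma$ is constant on $A\cap\mathrm{dom}(\sigma)$. The splitting ideal $\mathcal{S}pl$ is the ideal on $2^{<\omega}$ generated by the sets $S(A)$, $A\in[\omega]^{\omega}$. For an ideal $\mathcal{J}$, $\mathrm{cof}^*(\mathcal{J})=\min\{|\mathcal{F}|:\mathcal{F}\subseteq\mathcal{J}$ and for every $Y\in\mathcal{J}$ there is $F\in\mathcal{F}$ with $Y\subseteq^{*}F\}$. *)

theory Defs
  imports Main "HOL-Library.Equipollence"
begin

text \<open>2^{<omega} is rendered as the type bool list; dom(sigma) = {0..<length sigma}.\<close>

definition S :: "nat set \<Rightarrow> bool list set" where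
  "S A = {\<sigma>. \<forall>i\<in>A. \<forall>j\<in>A. i < length \<sigma> \<longrightarrow> j < length \<sigma> \<longrightarrow> \<sigma> ! i = \<sigma> ! j}"

definition Spl :: "bool list set set" where
  "Spl = {Y. \<exists>G. finite G \<and> G \<subseteq> {S A | A. infinite A} \<and> Y \<subseteq> \<Union>G}"

definition almost_subset :: "'a set \<Rightarrow> 'a set \<Rightarrow> bool" where
  "almost_subset Y F \<longleftrightarrow> finite (Y - F)"

definition cofinal_star :: "'a set set \<Rightarrow> 'a set set \<Rightarrow> bool" where
  "cofinal_star J \<F> \<longleftrightarrow> \<F> \<subseteq> J \<and> (\<forall>Y\<in>J. \<exists>F\<in>\<F>. almost_subset Y F)"

end

theory Submission
  imports Defs "HOL-Library.Countable"
begin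

lemma UN_finite_lepoll:
  assumes "infinite B" "I \<lesssim> B" "\<forall>i\<in>I. finite (A i)"
  shows "(\<Union>i\<in>I. A i) \<lesssim> B"
proof -
  have "\<forall>i\<in>I. A i \<lesssim> B" using assms finite_lepoll_infinite by blast
  then have "\<forall>i\<in>I. (card_of (A i), card_of B) \<in> ordLeq"
    unfolding lepoll_def card_of_ordLeq[symmetric] by blast
  moreover have "(card_of I, card_of B) \<in> ordLeq"
    using assms(2) unfolding lepoll_def card_of_ordLeq[symmetric] by blast
  ultimately have "(card_of (\<Union>i\<in>I. A i), card_of B) \<in> ordLeq"
    using card_of_UNION_ordLeq_infinite assms(1) by blast
  then show ?thesis unfolding lepoll_def card_of_ordLeq[symmetric] by blast
qed

lemma key:
  assumes fin: "finite BB" and inf: "\<forall>B\<in>BB. infinite B"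
    and cov: "finite (S A - \<Union>(S ` BB))"
  shows "\<exists>B\<in>BB. B \<subseteq> A"
proof (rule ccontr)
  assume "\<not> ?thesis"
  then have "\<forall>B\<in>BB. \<exists>q. q \<in> B \<and> q \<notin> A" by blast
  then obtain p where p: "\<forall>B\<in>BB. p B \<in> B \<and> p B \<notin> A" by metis
  define P where "P = p ` BB"
  have finP: "finite P" using fin P_def by simp
  have "\<forall>B\<in>BB. \<exists>q. q \<in> B \<and> q \<notin> P"
  proof
    fix B assume "B \<in> BB"
    then have "infinite (B - P)" using inf finP Diff_infinite_finite by blast
    then have "B - P \<noteq> {}" by force
    then show "\<exists>q. q \<in> B \<and> q \<notin> P" by blast
  qed
  then obtain t where t: "\<forall>B\<in>BB. t B \<in> B \<and> t B \<notin> P" by metis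
  define T where "T = t ` {B\<in>BB. B \<inter> A = {}}"
  define f where "f = (\<lambda>x. x \<in> A \<union> T)"
  have "\<forall>B\<in>BB. \<exists>i j. i \<in> B \<and> j \<in> B \<and> f i \<and> \<not> f j"
  proof
    fix B assume B: "B \<in> BB"
    have "p B \<in> P" using B P_def by auto
    then have "p B \<notin> T" using t T_def by auto
    then have nf: "\<not> f (p B)" using p B f_def by auto
    have "\<exists>i. i \<in> B \<and> f i"
    proof (cases "B \<inter> A = {}")
      case True
      then have "t B \<in> T" using B T_def by auto
      then show ?thesis using t B f_def by auto
    next
      case False
      then show ?thesis using f_def by auto
    qed
    then show "\<exists>i j. i \<in> B \<and> j \<in> B \<and> f i \<and> \<not> f j" using nf p B by blast
  qed
  then obtain w1 w2 where w: "\<forall>B\<in>BB. w1 B \<in> B \<and> w2 B \<in> B \<and> f (w1 B) \<and> \<not> f (w2 B)"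
    by metis
  have "finite (w1 ` BB \<union> w2 ` BB)" using fin by simp
  then obtain N where N: "\<forall>m\<in>w1 ` BB \<union> w2 ` BB. m < N"
    using finite_nat_set_iff_bounded by blast
  define \<sigma> where "\<sigma> n = map f [0..<n]" for n
  have sub: "\<sigma> ` {N..} \<subseteq> S A - \<Union>(S ` BB)"
  proof
    fix x assume "x \<in> \<sigma> ` {N..}"
    then obtain n where n: "n \<ge> N" "x = \<sigma> n" by auto
    have "x \<in> S A" using n unfolding S_def \<sigma>_def f_def by auto
    moreover have "x \<notin> S B" if B: "B \<in> BB" for B
    proof
      assume "x \<in> S B"
      moreover have "w1 B < n" "w2 B < n" using N B n by (meson UnCI image_eqI less_le_trans)+
      ultimately have "x ! w1 B = x ! w2 B" using w B n unfolding S_def \<sigma>_def by auto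
      then show False using w B n \<open>w1 B < n\<close> \<open>w2 B < n\<close> unfolding \<sigma>_def by auto
    qed
    ultimately show "x \<in> S A - \<Union>(S ` BB)" by blast
  qed
  have "inj \<sigma>" unfolding inj_def \<sigma>_def by (metis length_map length_upt minus_nat.diff_0)
  then have "infinite (\<sigma> ` {N..})"
    by (meson finite_imageD infinite_Ici inj_on_subset subset_UNIV)
  then show False using sub cov finite_subset by blast
qed

definition AD :: "nat set \<Rightarrow> nat set" where
  "AD X = range (\<lambda>n. to_nat (map (\<lambda>i. i \<in> X) [0..<n]))"

lemma AD_infinite: "infinite (AD X)"
proof -
  have "inj (\<lambda>n. to_nat (map (\<lambda>i. i \<in> X) [0..<n]))"
    unfolding inj_def by (metis length_map length_upt minus_nat.diff_0 to_nat_split)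
  then show ?thesis unfolding AD_def using finite_imageD infinite_UNIV_nat by blast
qed

lemma AD_disj:
  assumes "X \<noteq> Y" shows "finite (AD X \<inter> AD Y)"
proof -
  obtain d where d: "(d \<in> X) \<noteq> (d \<in> Y)" using assms by blast
  have "AD X \<inter> AD Y \<subseteq> (\<lambda>n. to_nat (map (\<lambda>i. i \<in> X) [0..<n])) ` {..d}"
  proof
    fix z assume "z \<in> AD X \<inter> AD Y"
    then obtain n where z1: "z = to_nat (map (\<lambda>i. i \<in> X) [0..<n])" unfolding AD_def by auto
    obtain m where z2: "z = to_nat (map (\<lambda>i. i \<in> Y) [0..<m])"
      using \<open>z \<in> AD X \<inter> AD Y\<close> unfolding AD_def by auto
    note z = z1 z2
    then have eq: "map (\<lambda>i. i \<in> X) [0..<n] = map (\<lambda>i. i \<in> Y) [0..<m]" by simp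
    then have "n = m" by (metis length_map length_upt minus_nat.diff_0)
    have "n \<le> d"
    proof (rule ccontr)
      assume "\<not> n \<le> d"
      then have "map (\<lambda>i. i \<in> X) [0..<n] ! d = map (\<lambda>i. i \<in> Y) [0..<m] ! d" using eq by simp
      then show False using d \<open>\<not> n \<le> d\<close> \<open>n = m\<close> by simp
    qed
    then show "z \<in> (\<lambda>n. to_nat (map (\<lambda>i. i \<in> X) [0..<n])) ` {..d}" using z by auto
  qed
  then show ?thesis using finite_subset by blast
qed

theorem mainTheorem12:
  shows "(\<exists>\<F>. cofinal_star Spl \<F> \<and> \<F> \<approx> (UNIV :: nat set set))
       \<and> (\<forall>\<F>. cofinal_star Spl \<F> \<longrightarrow> (UNIV :: nat set set) \<lesssim> \<F>)"
proof
  have c1: "cofinal_star Spl Spl" unfolding cofinal_star_def almost_subset_def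
    by (metis Diff_cancel finite.emptyI subset_refl)
  have l1: "Spl \<lesssim> (UNIV :: nat set set)"
    unfolding lepoll_def
    by (rule exI[of _ "image to_nat"]) (auto simp: inj_on_def inj_image_eq_iff)
  have l2: "(UNIV :: nat set set) \<lesssim> Spl"
    unfolding lepoll_def
  proof (rule exI[of _ "\<lambda>X. (\<lambda>n. replicate n True) ` X"], intro conjI)
    show "inj_on (\<lambda>X. (\<lambda>n. replicate n True) ` X) UNIV"
      by (rule inj_onI) (metis inj_image_eq_iff inj_onI length_replicate)
    have "S UNIV \<in> {S A | A. infinite A}" by auto
    moreover have "\<And>X. (\<lambda>n. replicate n True) ` X \<subseteq> S UNIV" unfolding S_def by auto
    ultimately show "(\<lambda>X. (\<lambda>n. replicate n True) ` X) ` UNIV \<subseteq> Spl"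
      unfolding Spl_def by (auto intro!: exI[of _ "{S UNIV}"])
  qed
  show "\<exists>\<F>. cofinal_star Spl \<F> \<and> \<F> \<approx> (UNIV :: nat set set)"
    using c1 l1 l2 lepoll_antisym by blast
next
  show "\<forall>\<F>. cofinal_star Spl \<F> \<longrightarrow> (UNIV :: nat set set) \<lesssim> \<F>"
  proof (intro allI impI)
    fix \<F> assume cf: "cofinal_star Spl \<F>"
    have "\<forall>F\<in>\<F>. \<exists>BB. finite BB \<and> (\<forall>B\<in>BB. infinite B) \<and> F \<subseteq> \<Union>(S ` BB)"
    proof
      fix F assume "F \<in> \<F>"
      then have "F \<in> Spl" using cf cofinal_star_def by blast
      then obtain G where G0: "finite G" "G \<subseteq> {S A | A. infinite A}" "F \<subseteq> \<Union>G"
        unfolding Spl_def mem_Collect_eq by blast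
      have "{S A | A. infinite A} = S ` {A. infinite A}" by auto
      then have G: "finite G" "G \<subseteq> S ` {A. infinite A}" "F \<subseteq> \<Union>G" using G0 by auto
      then obtain C where "C \<subseteq> {A. infinite A}" "finite C" "G = S ` C"
        using finite_subset_image by metis
      then show "\<exists>BB. finite BB \<and> (\<forall>B\<in>BB. infinite B) \<and> F \<subseteq> \<Union>(S ` BB)" using G by blast
    qed
    then obtain BB where BB: "\<forall>F\<in>\<F>. finite (BB F) \<and> (\<forall>B\<in>BB F. infinite B) \<and> F \<subseteq> \<Union>(S ` BB F)"
      by metis
    define U where "U = (\<Union>F\<in>\<F>. BB F)"
    have ex: "\<exists>B. B \<in> U \<and> B \<subseteq> AD X \<and> infinite B" for X
    proof -
      have "S (AD X) \<in> Spl" unfolding Spl_def using AD_infinite by blast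
      then obtain F where F: "F \<in> \<F>" "finite (S (AD X) - F)"
        using cf unfolding cofinal_star_def almost_subset_def by blast
      have "F \<subseteq> \<Union>(S ` BB F)" using BB F(1) by blast
      then have "S (AD X) - \<Union>(S ` BB F) \<subseteq> S (AD X) - F" by blast
      then have "finite (S (AD X) - \<Union>(S ` BB F))"
        using F(2) finite_subset by blast
      then obtain B where "B \<in> BB F" "B \<subseteq> AD X" using key[of "BB F" "AD X"] BB F(1) by blast
      then show ?thesis using U_def F BB by blast
    qed
    define h where "h X = (SOME B. B \<in> U \<and> B \<subseteq> AD X \<and> infinite B)" for X
    have h: "h X \<in> U \<and> h X \<subseteq> AD X \<and> infinite (h X)" for X
      unfolding h_def using someI_ex[OF ex[of X]] by blast
    have "inj h"
    proof (rule injI)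
      fix X Y assume "h X = h Y"
      then have "h X \<subseteq> AD X \<inter> AD Y" using h[of X] h[of Y] by auto
      then show "X = Y" using h[of X] AD_disj[of X Y] finite_subset by blast
    qed
    then have uU: "(UNIV :: nat set set) \<lesssim> U" unfolding lepoll_def using h by blast
    show "(UNIV :: nat set set) \<lesssim> \<F>"
    proof (cases "finite \<F>")
      case True
      then have "finite U" using U_def BB by auto
      then have "finite (UNIV :: nat set set)" using uU
        by (meson card_of_ordLeq card_of_ordLeq_finite lepoll_def)
      then show ?thesis by (simp add: Finite_Set.finite_set)
    next
      case False
      then have "U \<lesssim> \<F>" unfolding U_def using UN_finite_lepoll BB by blast
      then show ?thesis using uU lepoll_trans by blast
    qed
  qed
qed

end
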